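(* Let $(G,\Lambda)$ be a pseudo free self-similar action and $x\in\Lambda^\infty$. Then $x$ is $G$-periodic if and only if $\sigma^n(x)$ is $G$-periodic for every $n\in\mathbb{N}^k$.
   Context: Let $k\ge1$. A $k$-graph is a countable small category $\Lambda$ together with a functor $d:\Lambda\to\mathbb{N}^k$ (the degree map) with the unique factorization property: for every $\mu\in\Lambda$ and $m,n\in\mathbb{N}^k$ with $d(\mu)=m+n$ there are unique $\alpha,\beta\in\Lambda$ with $d(\alpha)=m$, $d(\beta)=n$ and $\mu=\alpha\beta$. Write $\Lambda^n=d^{-1}(n)$; $\Lambda^0$ is identified with the set of objects (vertices), and $r,s$ denote range and source. All $k$-graphs are assumed row-finite and source-free. Infinite paths: let $\Omega_k=\{(p,q)\in\mathbb{N}^k\times\mathbb{N}^k:p\le q\}$ with $r(p,q)=(p,p)$, $s(p,q)=(q,q)$, $(p,q)(q,m)=(p,m)$, $d(p,q)=q-p$. An infinite path is a degree-preserving functor $x:\Omega_k\to\Lambda$; $\Lambda^\infty$ is the set of infinite paths, and the shift is $\sigma^n(x)(p,q)=x(p+n,q+n)$. Self-similar actions: $G$ is a countable discrete group. A self-similar action $(G,\Lambda)$ consists of an action of $G$ on $\Lambda$ by automorphisms (bijections preserving $d$, $r$, $s$), written $g\cdot\mu$, and a restriction map $G\times\Lambda\to G$, $(g,\mu)\mapsto g|_\mu$, such that for all $g,h\in G$, $v\in\Lambda^0$ and $\mu,\nu$ with $s(\mu)=r(\nu)$: $g\cdot(\mu\nu)=(g\cdot\mu)(g|_\mu\cdot\nu)$;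 $g|_v=g$; $g|_{\mu\nu}=(g|_\mu)|_\nu$; $1_G|_\mu=1_G$; $(gh)|_\mu=g|_{h\cdot\mu}\,h|_\mu$. For $x\in\Lambda^\infty$, $(g\cdot x)(p,q)=g|_{x(0,p)}\cdot x(p,q)$. The action is pseudo free if $g\cdot\mu=\mu$ and $g|_\mu=1_G$ for some $\mu\in\Lambda$ imply $g=1_G$. $G$-aperiodicity: an infinite path $x$ is $G$-aperiodic if for all $g\in G$ and $p,q\in\mathbb{N}^k$ with $g\neq1_G$ or $p\neq q$ one has $\sigma^p(x)\neq g\cdot\sigma^q(x)$; otherwise $x$ is $G$-periodic. *)

theory Defs
  imports "HOL-Library.Function_Algebras" "HOL-Library.Countable_Set" "HOL-Algebra.Group"
begin

text \<open>Degrees live in N^k, represented as functions 'k \<Rightarrow> nat for a finite index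
type 'k with CARD('k) = k; addition, subtraction and the order are pointwise.
A k-graph is given by its set of morphisms L, its set of vertices (objects,
identified with identity morphisms) V, range r, source s, composition cmp
(meaningful when s mu = r nu) and degree map d.\<close>

definition is_kgraph ::
  "'m set \<Rightarrow> 'm set \<Rightarrow> ('m \<Rightarrow> 'm) \<Rightarrow> ('m \<Rightarrow> 'm) \<Rightarrow> ('m \<Rightarrow> 'm \<Rightarrow> 'm)
   \<Rightarrow> ('m \<Rightarrow> ('k::finite \<Rightarrow> nat)) \<Rightarrow> bool" where
  "is_kgraph L V r s cmp d \<longleftrightarrow>
     countable L \<and> V \<subseteq> L \<and>
     (\<forall>\<mu>\<in>L. r \<mu> \<in> V \<and> s \<mu> \<in> V) \<and>
     (\<forall>v\<in>V. r v = v \<and> s v = v) \<and>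
     (\<forall>\<mu>\<in>L. \<forall>\<nu>\<in>L. s \<mu> = r \<nu> \<longrightarrow>
        cmp \<mu> \<nu> \<in> L \<and> r (cmp \<mu> \<nu>) = r \<mu> \<and> s (cmp \<mu> \<nu>) = s \<nu>) \<and>
     (\<forall>\<mu>\<in>L. \<forall>\<nu>\<in>L. \<forall>\<tau>\<in>L. s \<mu> = r \<nu> \<longrightarrow> s \<nu> = r \<tau> \<longrightarrow>
        cmp (cmp \<mu> \<nu>) \<tau> = cmp \<mu> (cmp \<nu> \<tau>)) \<and>
     (\<forall>\<mu>\<in>L. cmp (r \<mu>) \<mu> = \<mu> \<and> cmp \<mu> (s \<mu>) = \<mu>) \<and>
     (\<forall>\<mu>\<in>L. \<forall>\<nu>\<in>L. s \<mu> = r \<nu> \<longrightarrow> d (cmp \<mu> \<nu>) = d \<mu> + d \<nu>) \<and>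
     (\<forall>v\<in>V. d v = 0) \<and>
     (\<forall>\<mu>\<in>L. \<forall>m n. d \<mu> = m + n \<longrightarrow>
        (\<exists>!(\<alpha>, \<beta>). \<alpha> \<in> L \<and> \<beta> \<in> L \<and> d \<alpha> = m \<and> d \<beta> = n \<and>
                  s \<alpha> = r \<beta> \<and> \<mu> = cmp \<alpha> \<beta>))"

definition row_finite ::
  "'m set \<Rightarrow> 'm set \<Rightarrow> ('m \<Rightarrow> 'm) \<Rightarrow> ('m \<Rightarrow> ('k \<Rightarrow> nat)) \<Rightarrow> bool" where
  "row_finite L V r d \<longleftrightarrow> (\<forall>v\<in>V. \<forall>n. finite {\<mu>\<in>L. d \<mu> = n \<and> r \<mu> = v})"

definition source_free ::
  "'m set \<Rightarrow> 'm set \<Rightarrow> ('m \<Rightarrow> 'm) \<Rightarrow> ('m \<Rightarrow> ('k \<Rightarrow> nat)) \<Rightarrow> bool" where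
  "source_free L V r d \<longleftrightarrow> (\<forall>v\<in>V. \<forall>n. {\<mu>\<in>L. d \<mu> = n \<and> r \<mu> = v} \<noteq> {})"

text \<open>Self-similar action of the group G (HOL-Algebra) on the k-graph:
act g mu = g . mu, restr g mu = g|_mu.\<close>

definition self_similar ::
  "('g, 'b) monoid_scheme \<Rightarrow> ('g \<Rightarrow> 'm \<Rightarrow> 'm) \<Rightarrow> ('g \<Rightarrow> 'm \<Rightarrow> 'g)
   \<Rightarrow> 'm set \<Rightarrow> 'm set \<Rightarrow> ('m \<Rightarrow> 'm) \<Rightarrow> ('m \<Rightarrow> 'm) \<Rightarrow> ('m \<Rightarrow> 'm \<Rightarrow> 'm)
   \<Rightarrow> ('m \<Rightarrow> ('k::finite \<Rightarrow> nat)) \<Rightarrow> bool" where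
  "self_similar G act restr L V r s cmp d \<longleftrightarrow>
     group G \<and> countable (carrier G) \<and>
     (\<forall>g\<in>carrier G. bij_betw (act g) L L \<and>
        (\<forall>\<mu>\<in>L. d (act g \<mu>) = d \<mu> \<and> r (act g \<mu>) = act g (r \<mu>) \<and>
                s (act g \<mu>) = act g (s \<mu>))) \<and>
     (\<forall>\<mu>\<in>L. act \<one>\<^bsub>G\<^esub> \<mu> = \<mu>) \<and>
     (\<forall>g\<in>carrier G. \<forall>h\<in>carrier G. \<forall>\<mu>\<in>L.
        act (g \<otimes>\<^bsub>G\<^esub> h) \<mu> = act g (act h \<mu>)) \<and>
     (\<forall>g\<in>carrier G. \<forall>\<mu>\<in>L. restr g \<mu> \<in> carrier G) \<and>
     (\<forall>g\<in>carrier G. \<forall>\<mu>\<in>L. \<forall>\<nu>\<in>L. s \<mu> = r \<nu> \<longrightarrow>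
        act g (cmp \<mu> \<nu>) = cmp (act g \<mu>) (act (restr g \<mu>) \<nu>)) \<and>
     (\<forall>g\<in>carrier G. \<forall>v\<in>V. restr g v = g) \<and>
     (\<forall>g\<in>carrier G. \<forall>\<mu>\<in>L. \<forall>\<nu>\<in>L. s \<mu> = r \<nu> \<longrightarrow>
        restr g (cmp \<mu> \<nu>) = restr (restr g \<mu>) \<nu>) \<and>
     (\<forall>\<mu>\<in>L. restr \<one>\<^bsub>G\<^esub> \<mu> = \<one>\<^bsub>G\<^esub>) \<and>
     (\<forall>g\<in>carrier G. \<forall>h\<in>carrier G. \<forall>\<mu>\<in>L.
        restr (g \<otimes>\<^bsub>G\<^esub> h) \<mu> = restr g (act h \<mu>) \<otimes>\<^bsub>G\<^esub> restr h \<mu>)"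

definition pseudo_free ::
  "('g, 'b) monoid_scheme \<Rightarrow> ('g \<Rightarrow> 'm \<Rightarrow> 'm) \<Rightarrow> ('g \<Rightarrow> 'm \<Rightarrow> 'g) \<Rightarrow> 'm set \<Rightarrow> bool" where
  "pseudo_free G act restr L \<longleftrightarrow>
     (\<forall>g\<in>carrier G. \<forall>\<mu>\<in>L. act g \<mu> = \<mu> \<and> restr g \<mu> = \<one>\<^bsub>G\<^esub> \<longrightarrow> g = \<one>\<^bsub>G\<^esub>)"

text \<open>Infinite paths: degree-preserving functors Omega_k \<rightarrow> Lambda, represented as
functions x p q defined for p \<le> q and equal to undefined elsewhere (so that
equality of paths is plain HOL equality). The object (p,p) is sent to the
vertex x p p.\<close>

definition inf_paths ::
  "'m set \<Rightarrow> 'm set \<Rightarrow> ('m \<Rightarrow> 'm) \<Rightarrow> ('m \<Rightarrow> 'm) \<Rightarrow> ('m \<Rightarrow> 'm \<Rightarrow> 'm)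
   \<Rightarrow> ('m \<Rightarrow> ('k::finite \<Rightarrow> nat)) \<Rightarrow> (('k \<Rightarrow> nat) \<Rightarrow> ('k \<Rightarrow> nat) \<Rightarrow> 'm) set" where
  "inf_paths L V r s cmp d =
     {x. (\<forall>p q. \<not> p \<le> q \<longrightarrow> x p q = undefined) \<and>
         (\<forall>p. x p p \<in> V) \<and>
         (\<forall>p q. p \<le> q \<longrightarrow> x p q \<in> L \<and> d (x p q) = q - p \<and>
                r (x p q) = x p p \<and> s (x p q) = x q q) \<and>
         (\<forall>p q m. p \<le> q \<longrightarrow> q \<le> m \<longrightarrow> cmp (x p q) (x q m) = x p m)}"

definition shift ::
  "('k::finite \<Rightarrow> nat) \<Rightarrow> (('k \<Rightarrow> nat) \<Rightarrow> ('k \<Rightarrow> nat) \<Rightarrow> 'm) \<Rightarrow> (('k \<Rightarrow> nat) \<Rightarrow> ('k \<Rightarrow> nat) \<Rightarrow> 'm)" where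
  "shift n x = (\<lambda>p q. if p \<le> q then x (p + n) (q + n) else undefined)"

definition path_act ::
  "('g \<Rightarrow> 'm \<Rightarrow> 'm) \<Rightarrow> ('g \<Rightarrow> 'm \<Rightarrow> 'g) \<Rightarrow> 'g
   \<Rightarrow> (('k::finite \<Rightarrow> nat) \<Rightarrow> ('k \<Rightarrow> nat) \<Rightarrow> 'm) \<Rightarrow> (('k \<Rightarrow> nat) \<Rightarrow> ('k \<Rightarrow> nat) \<Rightarrow> 'm)" where
  "path_act act restr g x = (\<lambda>p q. if p \<le> q then act (restr g (x 0 p)) (x p q) else undefined)"

definition G_aperiodic ::
  "('g, 'b) monoid_scheme \<Rightarrow> ('g \<Rightarrow> 'm \<Rightarrow> 'm) \<Rightarrow> ('g \<Rightarrow> 'm \<Rightarrow> 'g)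
   \<Rightarrow> (('k::finite \<Rightarrow> nat) \<Rightarrow> ('k \<Rightarrow> nat) \<Rightarrow> 'm) \<Rightarrow> bool" where
  "G_aperiodic G act restr x \<longleftrightarrow>
     (\<forall>g\<in>carrier G. \<forall>p q. (g \<noteq> \<one>\<^bsub>G\<^esub> \<or> p \<noteq> q) \<longrightarrow>
        shift p x \<noteq> path_act act restr g (shift q x))"

definition G_periodic ::
  "('g, 'b) monoid_scheme \<Rightarrow> ('g \<Rightarrow> 'm \<Rightarrow> 'm) \<Rightarrow> ('g \<Rightarrow> 'm \<Rightarrow> 'g)
   \<Rightarrow> (('k::finite \<Rightarrow> nat) \<Rightarrow> ('k \<Rightarrow> nat) \<Rightarrow> 'm) \<Rightarrow> bool" where
  "G_periodic G act restr x \<longleftrightarrow> \<not> G_aperiodic G act restr x"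

end

theory Submission
  imports Defs
begin

lemma fle_add: "(p::'k\<Rightarrow>nat) \<le> q \<Longrightarrow> p + n \<le> q + n"
  by (simp add: le_fun_def)

lemma fle_add_iff: "((p::'k\<Rightarrow>nat) + n \<le> q + n) = (p \<le> q)"
  by (simp add: le_fun_def)

lemma fle0: "(0::'k\<Rightarrow>nat) \<le> n" by (simp add: le_fun_def)

lemma fsub: "((q::'k\<Rightarrow>nat) + n) - (p + n) = q - p"
  by (simp add: fun_eq_iff)

lemma shift_inf:
  assumes "x \<in> inf_paths L V r s cmp d"
  shows "shift n x \<in> inf_paths L V r s cmp d"
  using assms unfolding inf_paths_def shift_def
  by (auto simp: fle_add fsub fle_add_iff)

lemma shift0:
  assumes "x \<in> inf_paths L V r s cmp d"
  shows "shift 0 x = x"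
  using assms unfolding inf_paths_def shift_def by (auto simp: fun_eq_iff)

lemma shift_shift:
  "shift n (shift q x) = shift (q + n) x"
  unfolding shift_def by (auto simp: fun_eq_iff fle_add add_ac)

lemma shift_act:
  assumes ss: "self_similar G act restr L V r s cmp d"
    and y: "y \<in> inf_paths L V r s cmp d" and g: "g \<in> carrier G"
  shows "shift n (path_act act restr g y) = path_act act restr (restr g (y 0 n)) (shift n y)"
proof -
  have "\<And>p. restr (restr g (y 0 n)) (y n (p + n)) = restr g (y 0 (p + n))"
  proof -
    fix p
    have a: "y 0 n \<in> L" "y n (p+n) \<in> L" "s (y 0 n) = r (y n (p+n))"
      using y fle0[of n] fle0[of p] fle_add[of 0 p n] unfolding inf_paths_def by auto
    have "cmp (y 0 n) (y n (p+n)) = y 0 (p+n)"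
      using y fle0[of n] fle0[of p] fle_add[of 0 p n] unfolding inf_paths_def by auto
    then show "restr (restr g (y 0 n)) (y n (p + n)) = restr g (y 0 (p + n))"
      using ss g a unfolding self_similar_def by metis
  qed
  then show ?thesis
    unfolding shift_def path_act_def
    by (auto simp: fun_eq_iff fle_add fle0 add.commute)
qed

theorem lemma3p4:
  fixes L V :: "'m set" and r s :: "'m \<Rightarrow> 'm" and cmp :: "'m \<Rightarrow> 'm \<Rightarrow> 'm"
    and d :: "'m \<Rightarrow> ('k::finite \<Rightarrow> nat)"
    and G :: "('g, 'b) monoid_scheme" and act :: "'g \<Rightarrow> 'm \<Rightarrow> 'm" and restr :: "'g \<Rightarrow> 'm \<Rightarrow> 'g"
    and x :: "('k \<Rightarrow> nat) \<Rightarrow> ('k \<Rightarrow> nat) \<Rightarrow> 'm"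
  assumes "is_kgraph L V r s cmp d"
    and "row_finite L V r d"
    and "source_free L V r d"
    and ss: "self_similar G act restr L V r s cmp d"
    and pf: "pseudo_free G act restr L"
    and x: "x \<in> inf_paths L V r s cmp d"
  shows "G_periodic G act restr x \<longleftrightarrow> (\<forall>n. G_periodic G act restr (shift n x))"
proof
  assume "\<forall>n. G_periodic G act restr (shift n x)"
  then show "G_periodic G act restr x" using shift0[OF x] by metis
next
  assume "G_periodic G act restr x"
  then obtain g p q where g: "g \<in> carrier G" and ne: "g \<noteq> \<one>\<^bsub>G\<^esub> \<or> p \<noteq> q"
    and eq: "shift p x = path_act act restr g (shift q x)"
    unfolding G_periodic_def G_aperiodic_def by blast
  show "\<forall>n. G_periodic G act restr (shift n x)"
  proof
    fix n
    let ?h = "restr g (shift q x 0 n)"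
    have yq: "shift q x \<in> inf_paths L V r s cmp d" by (rule shift_inf[OF x])
    have e2: "shift p (shift n x) = path_act act restr ?h (shift q (shift n x))"
      using shift_act[OF ss yq g, of n] eq shift_shift by (metis add.commute)
    have sqx: "shift q x 0 n = x q (q + n)" unfolding shift_def by (simp add: fle0 add.commute)
    have hc: "?h \<in> carrier G"
      using ss g x fle_add[OF fle0[of n], of q] unfolding self_similar_def inf_paths_def sqx
      by (auto simp: add.commute)
    have "?h \<noteq> \<one>\<^bsub>G\<^esub> \<or> p \<noteq> q"
    proof (rule ccontr)
      assume "\<not> (?h \<noteq> \<one>\<^bsub>G\<^esub> \<or> p \<noteq> q)"
      hence h1: "?h = \<one>\<^bsub>G\<^esub>" and pq: "p = q" by auto
      have "shift p x 0 n = path_act act restr g (shift q x) 0 n" using eq by simp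
      hence e3: "x p (p+n) = act (restr g (x p p)) (x p (p+n))"
        unfolding path_act_def shift_def using pq by (simp add: fle0 add.commute)
      have xv: "x p p \<in> V" using x unfolding inf_paths_def by auto
      have mu: "x p (p+n) \<in> L" using x fle_add[OF fle0[of n], of p]
        unfolding inf_paths_def by (auto simp: add.commute)
      have "restr g (x p p) = g" using ss g xv unfolding self_similar_def by auto
      with e3 have "act g (x p (p+n)) = x p (p+n)" by simp
      moreover have "restr g (x p (p+n)) = \<one>\<^bsub>G\<^esub>" using h1 sqx pq by simp
      ultimately have "g = \<one>\<^bsub>G\<^esub>" using pf g mu unfolding pseudo_free_def by blast
      with ne pq show False by simp
    qed
    then show "G_periodic G act restr (shift n x)"
      unfolding G_periodic_def G_aperiodic_def using hc e2 by blast
  qed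
qed

end
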